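(* Let $r,k\geq 2$ and let $G$ be a non-empty $(v,b,r,k)$-configuration. Then there exist three edges of $G$ whose six endpoints are pairwise distinct.
   Context: For positive integers $v,b,r,k$, a $(v,b,r,k)$-configuration is a connected bipartite graph with $v$ vertices on one side, each of degree $r$, and $b$ vertices on the other side, each of degree $k$, containing no cycle of length $4$. *)

theory Defs
  imports Main
begin

definition bip_adj :: "('p \<times> 'b) set \<Rightarrow> (('p + 'b) \<times> ('p + 'b)) set" where
  "bip_adj I = {(Inl p, Inr q) | p q. (p, q) \<in> I} \<union> {(Inr q, Inl p) | p q. (p, q) \<in> I}"

definition bip_connected :: "'p set \<Rightarrow> 'b set \<Rightarrow> ('p \<times> 'b) set \<Rightarrow> bool" where
  "bip_connected P B I \<longleftrightarrow> P <+> B \<noteq> {} \<and>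
     (\<forall>x\<in>P <+> B. \<forall>y\<in>P <+> B. (x, y) \<in> (bip_adj I)\<^sup>*)"

definition configuration ::
  "nat \<Rightarrow> nat \<Rightarrow> nat \<Rightarrow> nat \<Rightarrow> 'p set \<Rightarrow> 'b set \<Rightarrow> ('p \<times> 'b) set \<Rightarrow> bool" where
  "configuration v b r k P B I \<longleftrightarrow>
     0 < v \<and> 0 < b \<and> 0 < r \<and> 0 < k \<and>
     finite P \<and> finite B \<and> card P = v \<and> card B = b \<and>
     I \<subseteq> P \<times> B \<and>
     (\<forall>p\<in>P. card {q\<in>B. (p, q) \<in> I} = r) \<and>
     (\<forall>q\<in>B. card {p\<in>P. (p, q) \<in> I} = k) \<and>
     bip_connected P B I \<and>
     \<comment> \<open>no cycle of length 4\<close>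
     \<not> (\<exists>p1\<in>P. \<exists>p2\<in>P. \<exists>q1\<in>B. \<exists>q2\<in>B. p1 \<noteq> p2 \<and> q1 \<noteq> q2 \<and>
          (p1, q1) \<in> I \<and> (p1, q2) \<in> I \<and> (p2, q1) \<in> I \<and> (p2, q2) \<in> I)"

end

theory Submission
  imports Defs
begin

lemma two_elems: "2 \<le> card A \<Longrightarrow> \<exists>y\<in>A. y \<noteq> x"
proof (rule ccontr)
  assume c: "2 \<le> card A" "\<not> (\<exists>y\<in>A. y \<noteq> x)"
  then have "A \<subseteq> {x}" by auto
  then have "card A \<le> 1" using card_mono[of "{x}" A] by simp
  with c show False by simp
qed

theorem lemma4:
  fixes v b r k :: nat and P :: "'p set" and B :: "'b set" and I :: "('p \<times> 'b) set"
  assumes "r \<ge> 2" and "k \<ge> 2"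
    and "configuration v b r k P B I"
    and "P <+> B \<noteq> {}"
  shows "\<exists>p1 p2 p3 q1 q2 q3. (p1, q1) \<in> I \<and> (p2, q2) \<in> I \<and> (p3, q3) \<in> I \<and>
           p1 \<noteq> p2 \<and> p1 \<noteq> p3 \<and> p2 \<noteq> p3 \<and> q1 \<noteq> q2 \<and> q1 \<noteq> q3 \<and> q2 \<noteq> q3"
proof -
  note C = assms(3)[unfolded configuration_def]
  have "P \<noteq> {}" using C by auto
  then obtain p1 where p1: "p1 \<in> P" by auto
  have rP: "\<And>p. p \<in> P \<Longrightarrow> 2 \<le> card {q\<in>B. (p, q) \<in> I}" using C assms(1) by auto
  have kB: "\<And>q. q \<in> B \<Longrightarrow> 2 \<le> card {p\<in>P. (p, q) \<in> I}" using C assms(2) by auto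
  have sub: "I \<subseteq> P \<times> B" using C by auto
  have card1: "1 \<le> card {q\<in>B. (p1, q) \<in> I}" using rP[OF p1] by simp
  then obtain q1 where q1: "q1 \<in> B" "(p1,q1) \<in> I"
    by (metis (no_types, lifting) card.empty empty_Collect_eq not_one_le_zero)
  obtain q2 where q2: "q2 \<in> B" "(p1,q2) \<in> I" "q2 \<noteq> q1"
    using two_elems[OF rP[OF p1], of q1] by auto
  obtain p2 where p2: "p2 \<in> P" "(p2,q1) \<in> I" "p2 \<noteq> p1"
    using two_elems[OF kB[OF q1(1)], of p1] by auto
  obtain p3 where p3: "p3 \<in> P" "(p3,q2) \<in> I" "p3 \<noteq> p1"
    using two_elems[OF kB[OF q2(1)], of p1] by auto
  obtain q3 where q3: "q3 \<in> B" "(p2,q3) \<in> I" "q3 \<noteq> q1"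
    using two_elems[OF rP[OF p2(1)], of q1] by auto
  have nc: "\<not> (\<exists>p1\<in>P. \<exists>p2\<in>P. \<exists>q1\<in>B. \<exists>q2\<in>B. p1 \<noteq> p2 \<and> q1 \<noteq> q2 \<and>
          (p1, q1) \<in> I \<and> (p1, q2) \<in> I \<and> (p2, q1) \<in> I \<and> (p2, q2) \<in> I)" using C by blast
  have "p2 \<noteq> p3" using nc p1 p2 p3 q1 q2 by blast
  moreover have "q3 \<noteq> q2" using nc p1 p2 q1 q2 q3 by blast
  ultimately show ?thesis using p1 p2 p3 q1 q2 q3
    by (rule_tac x=p1 in exI, rule_tac x=p2 in exI, rule_tac x=p3 in exI,
        rule_tac x=q1 in exI, rule_tac x=q3 in exI, rule_tac x=q2 in exI) auto
qed

end
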